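(* Let $D=(V,A)$ be a directed graph and let $R_D$ be an inclusion-wise minimal bad set of $D$. Let $D'=(V',A')$ where $V'=V\cup\{r_1,r_2\}$ with $r_1,r_2$ new vertices and $A'=A\cup\{(r_1,r_2)\}\cup\{(v,r_1),(r_2,v)\mid v\in R_D\}$. Then $n(D')=n(D)+2$, $f(D')=f(D)+1$, and $\{r_1,r_2\}$ is an inclusion-wise minimal bad set of $D'$.
   Context: Directed graphs are oriented graphs: finite, no loops, no multiple arcs and no pair of antiparallel arcs. $n(H)$ is the number of vertices and $f(H)$ is the minimum size of a set $F\subseteq V(H)$ such that $H-F$ contains no directed cycle. A set $R\subseteq V(H)$ is bad if it is not contained in any minimum feedback vertex set of $H$; it is an inclusion-wise minimal bad set if no proper subset of it is bad. *)

theory Defs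
  imports Main
begin

definition oriented_graph :: "'a set \<Rightarrow> ('a \<times> 'a) set \<Rightarrow> bool" where
  "oriented_graph V A \<longleftrightarrow> finite V \<and> A \<subseteq> V \<times> V \<and> (\<forall>v. (v, v) \<notin> A)
     \<and> (\<forall>u v. (u, v) \<in> A \<longrightarrow> (v, u) \<notin> A)"

definition nv :: "'a set \<Rightarrow> ('a \<times> 'a) set \<Rightarrow> nat" where
  "nv V A = card V"

definition del_arcs :: "('a \<times> 'a) set \<Rightarrow> 'a set \<Rightarrow> ('a \<times> 'a) set" where
  "del_arcs A F = {(u, v). (u, v) \<in> A \<and> u \<notin> F \<and> v \<notin> F}"

definition is_fvs :: "'a set \<Rightarrow> ('a \<times> 'a) set \<Rightarrow> 'a set \<Rightarrow> bool" where
  "is_fvs V A F \<longleftrightarrow> F \<subseteq> V \<and> acyclic (del_arcs A F)"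

definition fvn :: "'a set \<Rightarrow> ('a \<times> 'a) set \<Rightarrow> nat" where
  "fvn V A = (LEAST k. \<exists>F. is_fvs V A F \<and> card F = k)"

definition is_min_fvs :: "'a set \<Rightarrow> ('a \<times> 'a) set \<Rightarrow> 'a set \<Rightarrow> bool" where
  "is_min_fvs V A F \<longleftrightarrow> is_fvs V A F \<and> card F = fvn V A"

definition bad_set :: "'a set \<Rightarrow> ('a \<times> 'a) set \<Rightarrow> 'a set \<Rightarrow> bool" where
  "bad_set V A R \<longleftrightarrow> R \<subseteq> V \<and> (\<forall>F. is_min_fvs V A F \<longrightarrow> \<not> R \<subseteq> F)"

definition minimal_bad_set :: "'a set \<Rightarrow> ('a \<times> 'a) set \<Rightarrow> 'a set \<Rightarrow> bool" where
  "minimal_bad_set V A R \<longleftrightarrow> bad_set V A R \<and> (\<forall>S. S \<subset> R \<longrightarrow> \<not> bad_set V A S)"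

end

theory Submission
  imports Defs
begin

lemma acyc_src:
  assumes "acyclic B" and "\<And>a b. (a,b) \<in> E \<Longrightarrow> (a,b) \<in> B \<or> a = r" and "r \<notin> Range E"
  shows "acyclic E"
proof -
  have key: "(x,y) \<in> B\<^sup>+ \<or> x = r" if "(x,y) \<in> E\<^sup>+" for x y
    using that
  proof (induction rule: trancl_induct)
    case (base y) then show ?case using assms(2) by blast
  next
    case (step y z)
    have "y \<in> Range E" using step(1) by (metis Range.intros Range_snd trancl_range)
    hence "y \<noteq> r" using assms(3) by blast
    hence "(y,z) \<in> B" using assms(2) step(2) by blast
    then show ?case using step(3) by (meson trancl_into_trancl)
  qed
  show ?thesis unfolding acyclic_def
  proof (intro allI notI)
    fix x assume h: "(x,x) \<in> E\<^sup>+"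
    have "x \<in> Range E" using h by (metis Range.intros Range_snd trancl_range)
    hence "x \<noteq> r" using assms(3) by blast
    with key[OF h] have "(x,x) \<in> B\<^sup>+" by blast
    with assms(1) show False unfolding acyclic_def by blast
  qed
qed

lemma acyc_tgt:
  assumes "acyclic B" and "\<And>a b. (a,b) \<in> E \<Longrightarrow> (a,b) \<in> B \<or> b = r" and "r \<notin> Domain E"
  shows "acyclic E"
proof -
  have "acyclic (E\<inverse>)"
    by (rule acyc_src[of "B\<inverse>" _ r]) (use assms in \<open>auto simp: acyclic_converse\<close>)
  thus ?thesis by (simp add: acyclic_converse)
qed

theorem mainTheorem15:
  fixes V :: "'a set" and A :: "('a \<times> 'a) set" and R :: "'a set" and r1 r2 :: 'a
  assumes "oriented_graph V A"
    and "minimal_bad_set V A R"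
    and "r1 \<notin> V" and "r2 \<notin> V" and "r1 \<noteq> r2"
  defines "V' \<equiv> V \<union> {r1, r2}"
    and "A' \<equiv> A \<union> {(r1, r2)} \<union> {(v, r1) | v. v \<in> R} \<union> {(r2, v) | v. v \<in> R}"
  shows "nv V' A' = nv V A + 2 \<and> fvn V' A' = fvn V A + 1 \<and> minimal_bad_set V' A' {r1, r2}"
proof -
  have finV: "finite V" and AV: "A \<subseteq> V \<times> V" using assms(1) unfolding oriented_graph_def by auto
  have bad: "bad_set V A R" using assms(2) unfolding minimal_bad_set_def by blast
  hence RV: "R \<subseteq> V" and badF: "\<And>F. is_min_fvs V A F \<Longrightarrow> \<not> R \<subseteq> F"
    unfolding bad_set_def by auto
  define f where "f = fvn V A"
  have "del_arcs A V = {}" unfolding del_arcs_def using AV by auto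
  hence Vfvs: "is_fvs V A V" unfolding is_fvs_def acyclic_def by simp
  have ex: "\<exists>F. is_fvs V A F \<and> card F = f"
    unfolding f_def fvn_def by (rule LeastI_ex) (use Vfvs in blast)
  then obtain F0 where F0: "is_fvs V A F0" "card F0 = f" by blast
  have lb: "f \<le> card F" if "is_fvs V A F" for F
    unfolding f_def fvn_def using that by (intro Least_le) blast
  have Rne: "R \<noteq> {}" using badF[of F0] F0 unfolding is_min_fvs_def f_def by auto
  have F0V: "F0 \<subseteq> V" using F0 unfolding is_fvs_def by auto
  have finV': "finite V'" using finV unfolding V'_def by auto
  have restr: "is_fvs V A (F' \<inter> V)" if "is_fvs V' A' F'" for F'
  proof -
    have "del_arcs A (F' \<inter> V) \<subseteq> del_arcs A' F'"
      using AV unfolding del_arcs_def A'_def by auto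
    thus ?thesis using that acyclic_subset unfolding is_fvs_def by blast
  qed
  have ext1: "is_fvs V' A' (F \<union> {r1})" if "is_fvs V A F" for F
  proof -
    have "acyclic (del_arcs A' (F \<union> {r1}))"
    proof (rule acyc_src[of "del_arcs A F" _ r2])
      show "acyclic (del_arcs A F)" using that unfolding is_fvs_def by blast
      show "\<And>a b. (a, b) \<in> del_arcs A' (F \<union> {r1}) \<Longrightarrow> (a, b) \<in> del_arcs A F \<or> a = r2"
        unfolding del_arcs_def A'_def by auto
      show "r2 \<notin> Range (del_arcs A' (F \<union> {r1}))"
        using AV assms(4) assms(5) RV unfolding del_arcs_def A'_def by auto
    qed
    thus ?thesis using that unfolding is_fvs_def V'_def by auto
  qed
  have ext2: "is_fvs V' A' (F \<union> {r2})" if "is_fvs V A F" for F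
  proof -
    have "acyclic (del_arcs A' (F \<union> {r2}))"
    proof (rule acyc_tgt[of "del_arcs A F" _ r1])
      show "acyclic (del_arcs A F)" using that unfolding is_fvs_def by blast
      show "\<And>a b. (a, b) \<in> del_arcs A' (F \<union> {r2}) \<Longrightarrow> (a, b) \<in> del_arcs A F \<or> b = r1"
        unfolding del_arcs_def A'_def by auto
      show "r1 \<notin> Domain (del_arcs A' (F \<union> {r2}))"
        using AV assms(3) assms(5) RV unfolding del_arcs_def A'_def by auto
    qed
    thus ?thesis using that unfolding is_fvs_def V'_def by auto
  qed
  have lb': "f + 1 \<le> card F'" if fv: "is_fvs V' A' F'" for F'
  proof (rule ccontr)
    assume less: "\<not> f + 1 \<le> card F'"
    have F'V': "F' \<subseteq> V'" using fv unfolding is_fvs_def by blast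
    have finF': "finite F'" using finV' F'V' finite_subset by blast
    have r: "is_fvs V A (F' \<inter> V)" using restr[OF fv] .
    have c: "f \<le> card (F' \<inter> V)" using lb[OF r] .
    show False
    proof (cases "r1 \<in> F' \<or> r2 \<in> F'")
      case True
      then obtain r where "r \<in> F'" "r \<notin> F' \<inter> V" using assms(3,4) by blast
      hence "F' \<inter> V \<subset> F'" by blast
      hence "card (F' \<inter> V) < card F'" using finF' psubset_card_mono by blast
      thus False using c less by linarith
    next
      case False
      hence eq: "F' \<inter> V = F'" using F'V' unfolding V'_def by blast
      have RF: "R \<subseteq> F'"
      proof
        fix v assume v: "v \<in> R"
        show "v \<in> F'"
        proof (rule ccontr)
          assume nv: "v \<notin> F'"
          let ?E = "del_arcs A' F'"
          have "(r1,r2) \<in> ?E" "(r2,v) \<in> ?E" "(v,r1) \<in> ?E"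
            using False nv v unfolding del_arcs_def A'_def by auto
          hence "(r1,r1) \<in> ?E\<^sup>+" by (meson r_into_trancl trancl_into_trancl)
          thus False using fv unfolding is_fvs_def acyclic_def by blast
        qed
      qed
      have "is_min_fvs V A F'" using r c less eq unfolding is_min_fvs_def f_def by auto
      thus False using badF RF by blast
    qed
  qed
  have card1: "card (F0 \<union> {r1}) = f + 1"
  proof -
    have "finite F0" using F0V finV finite_subset by blast
    moreover have "r1 \<notin> F0" using F0V assms(3) by blast
    ultimately show ?thesis using F0(2) by simp
  qed
  have card2: "card (F0 \<union> {r2}) = f + 1"
  proof -
    have "finite F0" using F0V finV finite_subset by blast
    moreover have "r2 \<notin> F0" using F0V assms(4) by blast
    ultimately show ?thesis using F0(2) by simp
  qed
  have fv': "fvn V' A' = f + 1"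
  proof -
    have ex': "\<exists>F. is_fvs V' A' F \<and> card F = fvn V' A'"
      unfolding fvn_def by (rule LeastI_ex) (use ext1[OF F0(1)] in blast)
    then obtain G where "is_fvs V' A' G" "card G = fvn V' A'" by blast
    hence "f + 1 \<le> fvn V' A'" using lb' by metis
    moreover have "fvn V' A' \<le> f + 1"
      unfolding fvn_def using ext1[OF F0(1)] card1 by (intro Least_le) blast
    ultimately show ?thesis by simp
  qed
  have nvp: "nv V' A' = nv V A + 2"
    unfolding nv_def V'_def using finV assms(3,4,5) by simp
  have min1: "is_min_fvs V' A' (F0 \<union> {r1})" using ext1[OF F0(1)] card1 fv' unfolding is_min_fvs_def by simp
  have min2: "is_min_fvs V' A' (F0 \<union> {r2})" using ext2[OF F0(1)] card2 fv' unfolding is_min_fvs_def by simp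
  have badr: "bad_set V' A' {r1, r2}"
    unfolding bad_set_def
  proof (intro conjI allI impI notI)
    show "{r1, r2} \<subseteq> V'" unfolding V'_def by blast
  next
    fix F' assume m: "is_min_fvs V' A' F'" and sub: "{r1, r2} \<subseteq> F'"
    have fv: "is_fvs V' A' F'" and cF: "card F' = f + 1" using m fv' unfolding is_min_fvs_def by auto
    have F'V': "F' \<subseteq> V'" using fv unfolding is_fvs_def by blast
    have finF': "finite F'" using finV' F'V' finite_subset by blast
    have eq: "F' = (F' \<inter> V) \<union> {r1, r2}" using F'V' sub unfolding V'_def by blast
    have "card F' = card (F' \<inter> V) + 2"
      using finF' assms(3,4,5) by (subst eq) (simp add: card_insert_if)
    moreover have "f \<le> card (F' \<inter> V)" using lb[OF restr[OF fv]] .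
    ultimately show False using cF by linarith
  qed
  have "minimal_bad_set V' A' {r1, r2}"
    unfolding minimal_bad_set_def
  proof (intro conjI allI impI)
    show "bad_set V' A' {r1, r2}" by (rule badr)
  next
    fix S assume "S \<subset> {r1, r2}"
    hence "S \<subseteq> F0 \<union> {r1} \<or> S \<subseteq> F0 \<union> {r2}" by blast
    thus "\<not> bad_set V' A' S" using min1 min2 unfolding bad_set_def by blast
  qed
  thus ?thesis using nvp fv' f_def by simp
qed

end
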